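(* Let $F=(A,R)$ be an abstract argumentation framework, $S$ an initial set of $F$, and $(A',R')$ the strongly connected component of $F$ containing $S$. (1) If $S$ is unattacked then $|A'|=1$. (2) If $S$ is challenged or unchallenged then $|A'|>1$. (3) If $S$ is challenged and $S'$ is an initial set of $F$ with $S'\to S$, then the strongly connected component containing $S'$ equals the one containing $S$.
   Context: An abstract argumentation framework is a pair $F=(A,R)$ with $A$ finite and $R\subseteq A\times A$ ($a\to b$ means $(a,b)\in R$). $S^+=\{a\mid\exists b\in S:b\to a\}$, $S^-=\{a\mid\exists b\in S: a\to b\}$, and $S\to S'$ means $S^+\cap S'\neq\emptyset$. $S$ is admissible if conflict-free and every attacker of an element of $S$ is attacked by some element of $S$. An initial set is a non-empty admissible set with no non-empty admissible proper subset. An initial set $S$ is unattacked if $S^-=\emptyset$; unchallenged if $S^-\neq\emptyset$ and no initial set $S'$ has $S'\to S$; challenged if some initial set $S'$ has $S'\to S$. A strongly connected component of $F$ is a maximal $A'\subseteq A$ (with induced attacks) such that any two arguments in $A'$ are joined by a directed path within $A'$; every initial set is contained in a single strongly connected component. *)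

theory Defs
  imports Main
begin

text \<open>An argumentation framework is a finite set A with an attack relation R \<subseteq> A \<times> A;
  (a,b) \<in> R means a attacks b.\<close>

definition AF :: "'a set \<Rightarrow> ('a \<times> 'a) set \<Rightarrow> bool" where
  "AF A R \<longleftrightarrow> finite A \<and> R \<subseteq> A \<times> A"

definition plus_set :: "('a \<times> 'a) set \<Rightarrow> 'a set \<Rightarrow> 'a set" where
  "plus_set R S = {a. \<exists>b\<in>S. (b, a) \<in> R}"

definition minus_set :: "('a \<times> 'a) set \<Rightarrow> 'a set \<Rightarrow> 'a set" where
  "minus_set R S = {a. \<exists>b\<in>S. (a, b) \<in> R}"

definition attacks_set :: "('a \<times> 'a) set \<Rightarrow> 'a set \<Rightarrow> 'a set \<Rightarrow> bool" where
  "attacks_set R S S' \<longleftrightarrow> plus_set R S \<inter> S' \<noteq> {}"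

definition conflict_free :: "('a \<times> 'a) set \<Rightarrow> 'a set \<Rightarrow> bool" where
  "conflict_free R S \<longleftrightarrow> (\<forall>a\<in>S. \<forall>b\<in>S. (a, b) \<notin> R)"

definition admissible :: "'a set \<Rightarrow> ('a \<times> 'a) set \<Rightarrow> 'a set \<Rightarrow> bool" where
  "admissible A R S \<longleftrightarrow> S \<subseteq> A \<and> conflict_free R S \<and>
     (\<forall>a\<in>S. \<forall>b. (b, a) \<in> R \<longrightarrow> (\<exists>c\<in>S. (c, b) \<in> R))"

definition initial :: "'a set \<Rightarrow> ('a \<times> 'a) set \<Rightarrow> 'a set \<Rightarrow> bool" where
  "initial A R S \<longleftrightarrow> S \<noteq> {} \<and> admissible A R S \<and>
     \<not> (\<exists>T. T \<noteq> {} \<and> T \<subset> S \<and> admissible A R T)"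

definition unattacked :: "'a set \<Rightarrow> ('a \<times> 'a) set \<Rightarrow> 'a set \<Rightarrow> bool" where
  "unattacked A R S \<longleftrightarrow> initial A R S \<and> minus_set R S = {}"

definition challenged :: "'a set \<Rightarrow> ('a \<times> 'a) set \<Rightarrow> 'a set \<Rightarrow> bool" where
  "challenged A R S \<longleftrightarrow> initial A R S \<and> (\<exists>S'. initial A R S' \<and> attacks_set R S' S)"

definition unchallenged :: "'a set \<Rightarrow> ('a \<times> 'a) set \<Rightarrow> 'a set \<Rightarrow> bool" where
  "unchallenged A R S \<longleftrightarrow> initial A R S \<and> minus_set R S \<noteq> {} \<and>
     \<not> (\<exists>S'. initial A R S' \<and> attacks_set R S' S)"

definition strongly_connected :: "('a \<times> 'a) set \<Rightarrow> 'a set \<Rightarrow> bool" where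
  "strongly_connected R C \<longleftrightarrow> (\<forall>x\<in>C. \<forall>y\<in>C. (x, y) \<in> (R \<inter> (C \<times> C))\<^sup>*)"

definition scc :: "'a set \<Rightarrow> ('a \<times> 'a) set \<Rightarrow> 'a set \<Rightarrow> bool" where
  "scc A R C \<longleftrightarrow> C \<noteq> {} \<and> C \<subseteq> A \<and> strongly_connected R C \<and>
     (\<forall>D. C \<subset> D \<and> D \<subseteq> A \<longrightarrow> \<not> strongly_connected R D)"

end

theory Submission
  imports Defs
begin

definition KK :: "('a \<times> 'a) set \<Rightarrow> 'a \<Rightarrow> 'a set" where
  "KK R u = {z. (u,z) \<in> R\<^sup>* \<and> (z,u) \<in> R\<^sup>*}"

lemma L1:
  assumes "(u,v) \<in> R\<^sup>*" "(v,u) \<in> R\<^sup>*"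
  shows "(u,v) \<in> (R \<inter> KK R u \<times> KK R u)\<^sup>*"
  using assms
proof (induction rule: rtrancl_induct)
  case base
  then show ?case by simp
next
  case (step y z)
  have yu: "(y,u) \<in> R\<^sup>*" using step by (meson converse_rtrancl_into_rtrancl)
  have "(u,y) \<in> (R \<inter> KK R u \<times> KK R u)\<^sup>*" using step.IH yu by blast
  moreover have "(y,z) \<in> R \<inter> KK R u \<times> KK R u"
    using step yu by (auto simp: KK_def)
  ultimately show ?case by (meson rtrancl_into_rtrancl)
qed

lemma KK_eq: "v \<in> KK R u \<Longrightarrow> KK R v = KK R u"
  unfolding KK_def by (auto intro: rtrancl_trans)

lemma KK_sc: "strongly_connected R (KK R u)"
  unfolding strongly_connected_def
proof (intro ballI)
  fix y z assume y: "y \<in> KK R u" and z: "z \<in> KK R u"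
  have "(u,z) \<in> (R \<inter> KK R u \<times> KK R u)\<^sup>*" using L1 z by (auto simp: KK_def)
  moreover have "(y,u) \<in> (R \<inter> KK R y \<times> KK R y)\<^sup>*" using L1 y by (auto simp: KK_def)
  hence "(y,u) \<in> (R \<inter> KK R u \<times> KK R u)\<^sup>*" using KK_eq[OF y] by simp
  ultimately show "(y,z) \<in> (R \<inter> KK R u \<times> KK R u)\<^sup>*" by (meson rtrancl_trans)
qed

lemma reach_in_A:
  assumes "(x,z) \<in> R\<^sup>*" "z \<noteq> x" "R \<subseteq> A \<times> A"
  shows "z \<in> A"
  using assms by (induction rule: rtrancl_induct) auto

lemma scc_KK:
  assumes "AF A R" "scc A R C" "x \<in> C"
  shows "C = KK R x"
proof -
  have sc: "strongly_connected R C" and CA: "C \<subseteq> A" using assms(2) by (auto simp: scc_def)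
  have "C \<subseteq> KK R x"
  proof
    fix y assume "y \<in> C"
    hence "(x,y) \<in> (R \<inter> C \<times> C)\<^sup>*" "(y,x) \<in> (R \<inter> C \<times> C)\<^sup>*"
      using sc assms(3) by (auto simp: strongly_connected_def)
    hence "(x,y) \<in> R\<^sup>*" "(y,x) \<in> R\<^sup>*" using rtrancl_mono[of "R \<inter> C \<times> C" R] by auto
    thus "y \<in> KK R x" by (simp add: KK_def)
  qed
  moreover have "KK R x \<subseteq> A"
  proof
    fix z assume "z \<in> KK R x"
    thus "z \<in> A" using reach_in_A[of x z R A] assms CA by (cases "z = x") (auto simp: KK_def AF_def)
  qed
  ultimately show ?thesis using assms(2) KK_sc[of R x] by (auto simp: scc_def)
qed

lemma initial_reach:
  assumes "initial A R S" "x \<in> S" "y \<in> S"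
  shows "(y,x) \<in> R\<^sup>*"
proof -
  define T where "T = {z \<in> S. (z,x) \<in> R\<^sup>*}"
  have adm: "admissible A R S" using assms by (simp add: initial_def)
  have "admissible A R T"
    unfolding admissible_def
  proof (intro conjI ballI allI impI)
    show "T \<subseteq> A" using adm by (auto simp: T_def admissible_def)
    show "conflict_free R T" using adm by (auto simp: T_def admissible_def conflict_free_def)
  next
    fix a w assume a: "a \<in> T" and w: "(w,a) \<in> R"
    have "a \<in> S" using a by (simp add: T_def)
    then obtain c where c: "c \<in> S" "(c,w) \<in> R" using adm w unfolding admissible_def by blast
    have "(c,x) \<in> R\<^sup>*" using a w c by (auto simp: T_def intro: converse_rtrancl_into_rtrancl)
    thus "\<exists>c\<in>T. (c,w) \<in> R" using c by (auto simp: T_def)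
  qed
  moreover have "T \<noteq> {}" "T \<subseteq> S" using assms by (auto simp: T_def)
  ultimately have "T = S" using assms(1) unfolding initial_def by blast
  thus ?thesis using assms(3) by (auto simp: T_def)
qed

theorem proposition3:
  fixes A :: "'a set" and R :: "('a \<times> 'a) set" and S C :: "'a set"
  assumes "AF A R"
    and "initial A R S"
    and "scc A R C" and "S \<subseteq> C"
  shows "(unattacked A R S \<longrightarrow> card C = 1)
       \<and> (challenged A R S \<or> unchallenged A R S \<longrightarrow> card C > 1)
       \<and> (\<forall>S' C'. challenged A R S \<and> initial A R S' \<and> attacks_set R S' S
                  \<and> scc A R C' \<and> S' \<subseteq> C' \<longrightarrow> C' = C)"
proof (intro conjI impI allI)
  have adm: "admissible A R S" using assms(2) by (simp add: initial_def)
  obtain a where a: "a \<in> S" using assms(2) by (auto simp: initial_def)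
  have CK: "C = KK R a" using scc_KK[OF assms(1,3)] a assms(4) by blast
  have finC: "finite C" using assms(1,3) unfolding scc_def AF_def by (meson finite_subset)
  have key: "b \<in> C \<and> b \<noteq> a'" if kh: "a' \<in> S" "(b,a') \<in> R" for a' b
  proof -
    obtain c where c: "c \<in> S" "(c,b) \<in> R" using adm kh unfolding admissible_def by blast
    have "(a',c) \<in> R\<^sup>*" using initial_reach[OF assms(2) c(1) that(1)] .
    hence "(a',b) \<in> R\<^sup>*" using c by (meson rtrancl_into_rtrancl)
    moreover have "(b,a') \<in> R\<^sup>*" using that by auto
    moreover have "C = KK R a'" using scc_KK[OF assms(1,3)] that(1) assms(4) by blast
    ultimately have "b \<in> C" by (simp add: KK_def)
    moreover have "b \<noteq> a'" using that adm by (auto simp: admissible_def conflict_free_def)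
    ultimately show ?thesis by blast
  qed
  {
    assume ua: "unattacked A R S"
    have "C = {a}"
    proof
      show "{a} \<subseteq> C" using a assms(4) by auto
      show "C \<subseteq> {a}"
      proof
        fix y assume "y \<in> C"
        hence ya: "(y,a) \<in> R\<^sup>*" using CK by (simp add: KK_def)
        show "y \<in> {a}"
        proof (rule ccontr)
          assume "y \<notin> {a}"
          then obtain z where "(z,a) \<in> R" using ya by (auto elim: rtranclE)
          thus False using ua a by (auto simp: unattacked_def minus_set_def)
        qed
      qed
    qed
    thus "card C = 1" by simp
  }
  {
    assume h: "challenged A R S \<or> unchallenged A R S"
    have "minus_set R S \<noteq> {}"
      using h unfolding challenged_def unchallenged_def attacks_set_def plus_set_def minus_set_def by blast
    then obtain b a' where ba: "a' \<in> S" "(b,a') \<in> R" by (auto simp: minus_set_def)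
    from key[OF ba] have "b \<in> C" "b \<noteq> a'" by auto
    moreover have "a' \<in> C" using ba assms(4) by auto
    ultimately have "{a', b} \<subseteq> C" "card {a',b} = 2" by simp_all
    hence "2 \<le> card C" using card_mono[OF finC] by metis
    thus "card C > 1" by simp
  }
  {
    fix S' C'
    assume h: "challenged A R S \<and> initial A R S' \<and> attacks_set R S' S \<and> scc A R C' \<and> S' \<subseteq> C'"
    then obtain b a' where ba: "b \<in> S'" "a' \<in> S" "(b,a') \<in> R"
      by (auto simp: attacks_set_def plus_set_def)
    have "b \<in> C" using key[OF ba(2,3)] by simp
    hence "C = KK R b" using scc_KK[OF assms(1,3)] by simp
    moreover have "C' = KK R b" using scc_KK[OF assms(1), of C' b] h ba(1) by blast
    ultimately show "C' = C" by simp
  }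
qed

end
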